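(* Let $\beta$ be a parameter and consider the map $\varphi:(x_0,x_1,x_2,x_3)\mapsto\big(x_1,x_2,x_3,(x_1x_3+\beta x_2)/x_0\big)$ on $\mathbb{C}^4$, equivalently the recurrence $$x_{n+2}x_{n-2}=x_{n+1}x_{n-1}+\beta\,x_n.$$ Define $$\mathcal{C}_0=\frac{x_0x_3+x_1^2+x_2^2}{x_1x_2},\quad \mathcal{C}_1=\frac{x_0x_3^2+x_1^2x_3+x_0x_2^2+\beta x_1x_2}{x_0x_2x_3},\quad \mathcal{C}_2=\frac{x_0^2x_3+x_1^2x_3+x_0x_2^2+\beta x_1x_2}{x_0x_1x_3},$$ and $$\mathcal{J}_1=\mathcal{C}_0\mathcal{C}_1\mathcal{C}_2-\mathcal{C}_0^2-\mathcal{C}_1^2-\mathcal{C}_2^2+2,\qquad \mathcal{J}_2=\mathcal{C}_0+\mathcal{C}_1+\mathcal{C}_2,\qquad \mathcal{J}_3=\mathcal{C}_0\mathcal{C}_1\mathcal{C}_2.$$ Then $\varphi$ is superintegrable: $\mathcal{J}_1,\mathcal{J}_2,\mathcal{J}_3$ are three independent conserved quantities of $\varphi$, and $\{\mathcal{J}_1,\mathcal{J}_2\}_1=0=\{\mathcal{J}_1,\mathcal{J}_3\}_1$, where $\{\cdot,\cdot\}_1$ is the Poisson bracket defined by $\{x_0,x_1\}_1=x_0x_1$, $\{x_0,x_2\}_1=x_0x_2$, $\{x_0,x_3\}_1=2x_0x_3$, $\{x_1,x_2\}_1=x_1x_2$, $\{x_1,x_3\}_1=x_1x_3$, $\{x_2,x_3\}_1=x_2x_3$.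 The iterates also satisfy the ninth-order linear recurrence $$x_{n+9}-(\mathcal{J}_1+1)(x_{n+6}-x_{n+3})-x_n=0,$$ and the solution of the initial value problem is $$x_{3n+j}=\mathcal{A}_j\,T_n(\mathcal{J}_1/2)+\mathcal{B}_j\,U_n(\mathcal{J}_1/2)+\beta\,\mathcal{C}_j/(\mathcal{J}_1-2),\qquad j=0,1,2,$$ where $T_n,U_n$ are the Chebyshev polynomials of the first and second kind and $$\mathcal{A}_j=2x_j-\frac{2x_{j+3}}{\mathcal{J}_1}-\frac{2\beta\,\mathcal{C}_j(\mathcal{J}_1-1)}{\mathcal{J}_1(\mathcal{J}_1-2)},\qquad \mathcal{B}_j=-x_j+\frac{2x_{j+3}+\beta\,\mathcal{C}_j}{\mathcal{J}_1},\qquad j=0,1,2.$$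
   Context: A conserved quantity of $\varphi$ is a function $F$ on $\mathbb{C}^4$ with $F\circ\varphi=F$. Superintegrable here means having $3$ (one less than the phase-space dimension) independent conserved quantities. The Poisson bracket is extended to rational functions by bilinearity and the Leibniz rule. The $\mathcal{C}_j$ and $\mathcal{J}_1$ are evaluated at the initial data $(x_0,x_1,x_2,x_3)$, and $x_3,x_4,x_5$ denote iterates of the recurrence. *)

theory Defs
  imports "HOL-Analysis.Analysis"
begin

definition phi :: "complex \<Rightarrow> complex^4 \<Rightarrow> complex^4" where
  "phi \<beta> x = (\<chi> i. if i = 0 then x$1 else if i = 1 then x$2 else if i = 2 then x$3
                          else (x$1 * x$3 + \<beta> * x$2) / x$0)"

definition C0 :: "complex \<Rightarrow> complex^4 \<Rightarrow> complex" where
  "C0 \<beta> x = (x$0 * x$3 + (x$1)^2 + (x$2)^2) / (x$1 * x$2)"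

definition C1 :: "complex \<Rightarrow> complex^4 \<Rightarrow> complex" where
  "C1 \<beta> x = (x$0 * (x$3)^2 + (x$1)^2 * x$3 + x$0 * (x$2)^2 + \<beta> * x$1 * x$2)
              / (x$0 * x$2 * x$3)"

definition C2 :: "complex \<Rightarrow> complex^4 \<Rightarrow> complex" where
  "C2 \<beta> x = ((x$0)^2 * x$3 + (x$1)^2 * x$3 + x$0 * (x$2)^2 + \<beta> * x$1 * x$2)
              / (x$0 * x$1 * x$3)"

definition Cj :: "complex \<Rightarrow> nat \<Rightarrow> complex^4 \<Rightarrow> complex" where
  "Cj \<beta> j = (if j = 0 then C0 \<beta> else if j = 1 then C1 \<beta> else C2 \<beta>)"

definition J1 :: "complex \<Rightarrow> complex^4 \<Rightarrow> complex" where
  "J1 \<beta> x = C0 \<beta> x * C1 \<beta> x * C2 \<beta> x - (C0 \<beta> x)^2 - (C1 \<beta> x)^2 - (C2 \<beta> x)^2 + 2"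

definition J2 :: "complex \<Rightarrow> complex^4 \<Rightarrow> complex" where
  "J2 \<beta> x = C0 \<beta> x + C1 \<beta> x + C2 \<beta> x"

definition J3 :: "complex \<Rightarrow> complex^4 \<Rightarrow> complex" where
  "J3 \<beta> x = C0 \<beta> x * C1 \<beta> x * C2 \<beta> x"

text \<open>Domain where all the rational functions above are defined: all coordinates nonzero.\<close>
definition dom4 :: "(complex^4) set" where
  "dom4 = {x. \<forall>i. x$i \<noteq> 0}"

definition pd :: "4 \<Rightarrow> (complex^4 \<Rightarrow> complex) \<Rightarrow> complex^4 \<Rightarrow> complex" where
  "pd i F x = deriv (\<lambda>t. F (\<chi> k. if k = i then t else x$k)) (x$i)"

definition grad :: "(complex^4 \<Rightarrow> complex) \<Rightarrow> complex^4 \<Rightarrow> complex^4" where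
  "grad F x = (\<chi> i. pd i F x)"

text \<open>Structure functions {x_i, x_j}_1 of the quadratic Poisson bracket.\<close>
definition wcoef :: "4 \<Rightarrow> 4 \<Rightarrow> complex" where
  "wcoef i j =
     (if (i, j) = (0, 3) then 2 else if (i, j) = (3, 0) then -2
      else if (i, j) \<in> {(0, 1), (0, 2), (1, 2), (1, 3), (2, 3)} then 1
      else if (i, j) \<in> {(1, 0), (2, 0), (2, 1), (3, 1), (3, 2)} then -1
      else 0)"

definition pstruct :: "complex^4 \<Rightarrow> 4 \<Rightarrow> 4 \<Rightarrow> complex" where
  "pstruct x i j = wcoef i j * x$i * x$j"

text \<open>The Poisson bracket {F,G}_1 extended by bilinearity and the Leibniz rule.\<close>
definition pbracket :: "(complex^4 \<Rightarrow> complex) \<Rightarrow> (complex^4 \<Rightarrow> complex) \<Rightarrow> complex^4 \<Rightarrow> complex" where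
  "pbracket F G x = (\<Sum>i\<in>UNIV. \<Sum>j\<in>UNIV. pd i F x * pd j G x * pstruct x i j)"

fun chebT :: "nat \<Rightarrow> complex \<Rightarrow> complex" where
  "chebT 0 z = 1"
| "chebT (Suc 0) z = z"
| "chebT (Suc (Suc n)) z = 2 * z * chebT (Suc n) z - chebT n z"

fun chebU :: "nat \<Rightarrow> complex \<Rightarrow> complex" where
  "chebU 0 z = 1"
| "chebU (Suc 0) z = 2 * z"
| "chebU (Suc (Suc n)) z = 2 * z * chebU (Suc n) z - chebU n z"

definition init4 :: "(nat \<Rightarrow> complex) \<Rightarrow> complex^4" where
  "init4 x = (\<chi> i. if i = 0 then x 0 else if i = 1 then x 1 else if i = 2 then x 2 else x 3)"

end

theory Submission
  imports Defs
begin

definition upd :: "complex^4 \<Rightarrow> 4 \<Rightarrow> complex \<Rightarrow> complex^4" where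
  "upd x i t = (\<chi> k. if k = i then t else x$k)"

lemma upd_same[simp]: "upd x i (x$i) = x"
  by (simp add: upd_def vec_eq_iff)

lemma exhaust4: "(i::4) = 0 \<or> i = 1 \<or> i = 2 \<or> i = 3"
  using exhaust_4[of i] by auto

lemma UNIV4: "(UNIV::4 set) = {0,1,2,3}"
  using exhaust4 by auto

lemma sum4: "sum f (UNIV::4 set) = f 0 + f 1 + f 2 + f 3"
  unfolding UNIV4 by (simp add: add.assoc)

lemma dom4D: "x \<in> dom4 \<Longrightarrow> x$0 \<noteq> 0 \<and> x$1 \<noteq> 0 \<and> x$2 \<noteq> 0 \<and> x$3 \<noteq> 0"
  by (simp add: dom4_def)

lemma der_C0_0: "x \<in> dom4 \<Longrightarrow> ((\<lambda>t. C0 \<beta> (upd x 0 t)) has_field_derivative (x$3/(x$1*x$2))) (at (x$(0::4)))"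
  unfolding C0_def upd_def dom4_def
  by (auto intro!: derivative_eq_intros simp: field_simps power2_eq_square)

lemma pd_C0_0: "x \<in> dom4 \<Longrightarrow> pd 0 (C0 \<beta>) x = x$3/(x$1*x$2)"
  unfolding pd_def using der_C0_0[of x \<beta>, unfolded upd_def] by (intro DERIV_imp_deriv) auto

lemma der_C0_1: "x \<in> dom4 \<Longrightarrow> ((\<lambda>t. C0 \<beta> (upd x 1 t)) has_field_derivative (-x$0*x$3/((x$1)^2*x$2)+1/x$2-x$2/(x$1)^2)) (at (x$(1::4)))"
  unfolding C0_def upd_def dom4_def
  by (auto intro!: derivative_eq_intros simp: field_simps power2_eq_square)

lemma pd_C0_1: "x \<in> dom4 \<Longrightarrow> pd 1 (C0 \<beta>) x = -x$0*x$3/((x$1)^2*x$2)+1/x$2-x$2/(x$1)^2"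
  unfolding pd_def using der_C0_1[of x \<beta>, unfolded upd_def] by (intro DERIV_imp_deriv) auto

lemma der_C0_2: "x \<in> dom4 \<Longrightarrow> ((\<lambda>t. C0 \<beta> (upd x 2 t)) has_field_derivative (-x$0*x$3/(x$1*(x$2)^2)-x$1/(x$2)^2+1/x$1)) (at (x$(2::4)))"
  unfolding C0_def upd_def dom4_def
  by (auto intro!: derivative_eq_intros simp: field_simps power2_eq_square)

lemma pd_C0_2: "x \<in> dom4 \<Longrightarrow> pd 2 (C0 \<beta>) x = -x$0*x$3/(x$1*(x$2)^2)-x$1/(x$2)^2+1/x$1"
  unfolding pd_def using der_C0_2[of x \<beta>, unfolded upd_def] by (intro DERIV_imp_deriv) auto

lemma der_C0_3: "x \<in> dom4 \<Longrightarrow> ((\<lambda>t. C0 \<beta> (upd x 3 t)) has_field_derivative (x$0/(x$1*x$2))) (at (x$(3::4)))"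
  unfolding C0_def upd_def dom4_def
  by (auto intro!: derivative_eq_intros simp: field_simps power2_eq_square)

lemma pd_C0_3: "x \<in> dom4 \<Longrightarrow> pd 3 (C0 \<beta>) x = x$0/(x$1*x$2)"
  unfolding pd_def using der_C0_3[of x \<beta>, unfolded upd_def] by (intro DERIV_imp_deriv) auto

lemma der_C1_0: "x \<in> dom4 \<Longrightarrow> ((\<lambda>t. C1 \<beta> (upd x 0 t)) has_field_derivative (-((x$1)^2/((x$0)^2*x$2))-\<beta>*x$1/((x$0)^2*x$3))) (at (x$(0::4)))"
  unfolding C1_def upd_def dom4_def
  by (auto intro!: derivative_eq_intros simp: field_simps power2_eq_square)

lemma pd_C1_0: "x \<in> dom4 \<Longrightarrow> pd 0 (C1 \<beta>) x = -((x$1)^2/((x$0)^2*x$2))-\<beta>*x$1/((x$0)^2*x$3)"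
  unfolding pd_def using der_C1_0[of x \<beta>, unfolded upd_def] by (intro DERIV_imp_deriv) auto

lemma der_C1_1: "x \<in> dom4 \<Longrightarrow> ((\<lambda>t. C1 \<beta> (upd x 1 t)) has_field_derivative (2*x$1/(x$0*x$2)+\<beta>/(x$0*x$3))) (at (x$(1::4)))"
  unfolding C1_def upd_def dom4_def
  by (auto intro!: derivative_eq_intros simp: field_simps power2_eq_square)

lemma pd_C1_1: "x \<in> dom4 \<Longrightarrow> pd 1 (C1 \<beta>) x = 2*x$1/(x$0*x$2)+\<beta>/(x$0*x$3)"
  unfolding pd_def using der_C1_1[of x \<beta>, unfolded upd_def] by (intro DERIV_imp_deriv) auto

lemma der_C1_2: "x \<in> dom4 \<Longrightarrow> ((\<lambda>t. C1 \<beta> (upd x 2 t)) has_field_derivative (-(x$3/(x$2)^2)-(x$1)^2/(x$0*(x$2)^2)+1/x$3)) (at (x$(2::4)))"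
  unfolding C1_def upd_def dom4_def
  by (auto intro!: derivative_eq_intros simp: field_simps power2_eq_square)

lemma pd_C1_2: "x \<in> dom4 \<Longrightarrow> pd 2 (C1 \<beta>) x = -(x$3/(x$2)^2)-(x$1)^2/(x$0*(x$2)^2)+1/x$3"
  unfolding pd_def using der_C1_2[of x \<beta>, unfolded upd_def] by (intro DERIV_imp_deriv) auto

lemma der_C1_3: "x \<in> dom4 \<Longrightarrow> ((\<lambda>t. C1 \<beta> (upd x 3 t)) has_field_derivative (1/x$2-x$2/(x$3)^2-\<beta>*x$1/(x$0*(x$3)^2))) (at (x$(3::4)))"
  unfolding C1_def upd_def dom4_def
  by (auto intro!: derivative_eq_intros simp: field_simps power2_eq_square)

lemma pd_C1_3: "x \<in> dom4 \<Longrightarrow> pd 3 (C1 \<beta>) x = 1/x$2-x$2/(x$3)^2-\<beta>*x$1/(x$0*(x$3)^2)"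
  unfolding pd_def using der_C1_3[of x \<beta>, unfolded upd_def] by (intro DERIV_imp_deriv) auto

lemma der_C2_0: "x \<in> dom4 \<Longrightarrow> ((\<lambda>t. C2 \<beta> (upd x 0 t)) has_field_derivative (1/x$1-x$1/(x$0)^2-\<beta>*x$2/((x$0)^2*x$3))) (at (x$(0::4)))"
  unfolding C2_def upd_def dom4_def
  by (auto intro!: derivative_eq_intros simp: field_simps power2_eq_square)

lemma pd_C2_0: "x \<in> dom4 \<Longrightarrow> pd 0 (C2 \<beta>) x = 1/x$1-x$1/(x$0)^2-\<beta>*x$2/((x$0)^2*x$3)"
  unfolding pd_def using der_C2_0[of x \<beta>, unfolded upd_def] by (intro DERIV_imp_deriv) auto

lemma der_C2_1: "x \<in> dom4 \<Longrightarrow> ((\<lambda>t. C2 \<beta> (upd x 1 t)) has_field_derivative (-(x$0/(x$1)^2)+1/x$0-(x$2)^2/((x$1)^2*x$3))) (at (x$(1::4)))"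
  unfolding C2_def upd_def dom4_def
  by (auto intro!: derivative_eq_intros simp: field_simps power2_eq_square)

lemma pd_C2_1: "x \<in> dom4 \<Longrightarrow> pd 1 (C2 \<beta>) x = -(x$0/(x$1)^2)+1/x$0-(x$2)^2/((x$1)^2*x$3)"
  unfolding pd_def using der_C2_1[of x \<beta>, unfolded upd_def] by (intro DERIV_imp_deriv) auto

lemma der_C2_2: "x \<in> dom4 \<Longrightarrow> ((\<lambda>t. C2 \<beta> (upd x 2 t)) has_field_derivative (2*x$2/(x$1*x$3)+\<beta>/(x$0*x$3))) (at (x$(2::4)))"
  unfolding C2_def upd_def dom4_def
  by (auto intro!: derivative_eq_intros simp: field_simps power2_eq_square)

lemma pd_C2_2: "x \<in> dom4 \<Longrightarrow> pd 2 (C2 \<beta>) x = 2*x$2/(x$1*x$3)+\<beta>/(x$0*x$3)"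
  unfolding pd_def using der_C2_2[of x \<beta>, unfolded upd_def] by (intro DERIV_imp_deriv) auto

lemma der_C2_3: "x \<in> dom4 \<Longrightarrow> ((\<lambda>t. C2 \<beta> (upd x 3 t)) has_field_derivative (-((x$2)^2/(x$1*(x$3)^2))-\<beta>*x$2/(x$0*(x$3)^2))) (at (x$(3::4)))"
  unfolding C2_def upd_def dom4_def
  by (auto intro!: derivative_eq_intros simp: field_simps power2_eq_square)

lemma pd_C2_3: "x \<in> dom4 \<Longrightarrow> pd 3 (C2 \<beta>) x = -((x$2)^2/(x$1*(x$3)^2))-\<beta>*x$2/(x$0*(x$3)^2)"
  unfolding pd_def using der_C2_3[of x \<beta>, unfolded upd_def] by (intro DERIV_imp_deriv) auto

lemma has_C0: "x \<in> dom4 \<Longrightarrow> ((\<lambda>t. C0 \<beta> (upd x i t)) has_field_derivative pd i (C0 \<beta>) x) (at (x$i))"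
  using exhaust4[of i] der_C0_0[of x \<beta>] der_C0_1[of x \<beta>] der_C0_2[of x \<beta>] der_C0_3[of x \<beta>]
    pd_C0_0[of x \<beta>] pd_C0_1[of x \<beta>] pd_C0_2[of x \<beta>] pd_C0_3[of x \<beta>] by auto

lemma has_C1: "x \<in> dom4 \<Longrightarrow> ((\<lambda>t. C1 \<beta> (upd x i t)) has_field_derivative pd i (C1 \<beta>) x) (at (x$i))"
  using exhaust4[of i] der_C1_0[of x \<beta>] der_C1_1[of x \<beta>] der_C1_2[of x \<beta>] der_C1_3[of x \<beta>]
    pd_C1_0[of x \<beta>] pd_C1_1[of x \<beta>] pd_C1_2[of x \<beta>] pd_C1_3[of x \<beta>] by auto

lemma has_C2: "x \<in> dom4 \<Longrightarrow> ((\<lambda>t. C2 \<beta> (upd x i t)) has_field_derivative pd i (C2 \<beta>) x) (at (x$i))"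
  using exhaust4[of i] der_C2_0[of x \<beta>] der_C2_1[of x \<beta>] der_C2_2[of x \<beta>] der_C2_3[of x \<beta>]
    pd_C2_0[of x \<beta>] pd_C2_1[of x \<beta>] pd_C2_2[of x \<beta>] pd_C2_3[of x \<beta>] by auto


definition PB :: "(4 \<Rightarrow> complex) \<Rightarrow> (4 \<Rightarrow> complex) \<Rightarrow> complex^4 \<Rightarrow> complex" where
  "PB u v x = (\<Sum>i\<in>UNIV. \<Sum>j\<in>UNIV. u i * v j * pstruct x i j)"

lemma pbracket_PB: "pbracket F G x = PB (\<lambda>i. pd i F x) (\<lambda>i. pd i G x) x"
  by (simp add: pbracket_def PB_def)

lemma wvals: "wcoef 0 1 = 1" "wcoef 0 2 = 1" "wcoef 0 3 = 2" "wcoef 1 2 = 1" "wcoef 1 3 = 1" "wcoef 2 3 = 1"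
  "wcoef 1 0 = -1" "wcoef 2 0 = -1" "wcoef 3 0 = -2" "wcoef 2 1 = -1" "wcoef 3 1 = -1" "wcoef 3 2 = -1"
  "wcoef 0 0 = 0" "wcoef 1 1 = 0" "wcoef 2 2 = 0" "wcoef 3 3 = 0"
  by (simp_all add: wcoef_def)

lemma wcoef_anti: "wcoef j i = - wcoef i j"
  using exhaust4[of i] exhaust4[of j] by (elim disjE) (simp_all add: wvals)

lemma pstruct_anti: "pstruct x j i = - pstruct x i j"
  unfolding pstruct_def wcoef_anti[where i=i and j=j] by (simp add: mult_ac)

lemma pstruct_anti_term: "v j * u i * pstruct x j i = - (u i * v j * pstruct x i j)"
  unfolding pstruct_anti[of x j i] by (simp add: mult_ac)

lemma PB_anti: "PB v u x = - PB u v x"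
proof -
  have "PB v u x = (\<Sum>j\<in>UNIV. \<Sum>i\<in>UNIV. v j * u i * pstruct x j i)"
    unfolding PB_def ..
  also have "\<dots> = (\<Sum>i\<in>UNIV. \<Sum>j\<in>UNIV. v j * u i * pstruct x j i)"
    by (rule sum.swap)
  also have "\<dots> = (\<Sum>i\<in>UNIV. \<Sum>j\<in>UNIV. - (u i * v j * pstruct x i j))"
    by (intro sum.cong refl) (rule pstruct_anti_term)
  also have "\<dots> = - PB u v x"
    unfolding PB_def by (simp add: sum_negf)
  finally show ?thesis .
qed

lemma PB_self: "PB u u x = 0"
  using PB_anti[of u u x] by simp

lemma PB_add_l: "PB (\<lambda>i. f i + g i) z x = PB f z x + PB g z x"
  unfolding PB_def by (simp add: distrib_right sum.distrib)
lemma PB_scale_l: "PB (\<lambda>i. a * f i) z x = a * PB f z x"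
  unfolding PB_def by (simp add: sum_distrib_left mult.assoc)
lemma PB_add_r: "PB z (\<lambda>i. f i + g i) x = PB z f x + PB z g x"
  unfolding PB_def by (simp add: distrib_right distrib_left sum.distrib)
lemma PB_scale_r: "PB z (\<lambda>i. a * f i) x = a * PB z f x"
  unfolding PB_def by (simp add: sum_distrib_left mult_ac)

lemma PB_linl: "PB (\<lambda>i. a * u i + b * v i + c * w i) z x = a * PB u z x + b * PB v z x + c * PB w z x"
  by (simp only: PB_add_l PB_scale_l)

lemma PB_linr: "PB z (\<lambda>i. a * u i + b * v i + c * w i) x = a * PB z u x + b * PB z v x + c * PB z w x"
  by (simp only: PB_add_r PB_scale_r)

lemma PB_scaled: "PB u v x * (m * n) = (\<Sum>i\<in>UNIV. \<Sum>j\<in>UNIV. (u i * x$i * m) * (v j * x$j * n) * wcoef i j)"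
  unfolding PB_def pstruct_def sum_distrib_right by (intro sum.cong refl) (simp add: mult_ac)

lemma xpd_C0_0: assumes a: "x \<in> dom4" shows "pd 0 (C0 \<beta>) x * x$(0::4) * (x$1*x$2) = x$0*x$3"
  unfolding pd_C0_0[OF a] using dom4D[OF a] by (simp add: field_simps power2_eq_square)

lemma xpd_C0_1: assumes a: "x \<in> dom4" shows "pd 1 (C0 \<beta>) x * x$(1::4) * (x$1*x$2) = (x$1)^2-x$0*x$3-(x$2)^2"
  unfolding pd_C0_1[OF a] using dom4D[OF a] by (simp add: field_simps power2_eq_square)

lemma xpd_C0_2: assumes a: "x \<in> dom4" shows "pd 2 (C0 \<beta>) x * x$(2::4) * (x$1*x$2) = (x$2)^2-x$0*x$3-(x$1)^2"
  unfolding pd_C0_2[OF a] using dom4D[OF a] by (simp add: field_simps power2_eq_square)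

lemma xpd_C0_3: assumes a: "x \<in> dom4" shows "pd 3 (C0 \<beta>) x * x$(3::4) * (x$1*x$2) = x$0*x$3"
  unfolding pd_C0_3[OF a] using dom4D[OF a] by (simp add: field_simps power2_eq_square)

lemma xpd_C1_0: assumes a: "x \<in> dom4" shows "pd 0 (C1 \<beta>) x * x$(0::4) * (x$0*x$2*x$3) = - ((x$1)^2*x$3)-\<beta>*x$1*x$2"
  unfolding pd_C1_0[OF a] using dom4D[OF a] by (simp add: field_simps power2_eq_square)

lemma xpd_C1_1: assumes a: "x \<in> dom4" shows "pd 1 (C1 \<beta>) x * x$(1::4) * (x$0*x$2*x$3) = 2*(x$1)^2*x$3+\<beta>*x$1*x$2"
  unfolding pd_C1_1[OF a] using dom4D[OF a] by (simp add: field_simps power2_eq_square)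

lemma xpd_C1_2: assumes a: "x \<in> dom4" shows "pd 2 (C1 \<beta>) x * x$(2::4) * (x$0*x$2*x$3) = x$0*(x$2)^2-x$0*(x$3)^2-(x$1)^2*x$3"
  unfolding pd_C1_2[OF a] using dom4D[OF a] by (simp add: field_simps power2_eq_square)

lemma xpd_C1_3: assumes a: "x \<in> dom4" shows "pd 3 (C1 \<beta>) x * x$(3::4) * (x$0*x$2*x$3) = x$0*(x$3)^2-x$0*(x$2)^2-\<beta>*x$1*x$2"
  unfolding pd_C1_3[OF a] using dom4D[OF a] by (simp add: field_simps power2_eq_square)

lemma xpd_C2_0: assumes a: "x \<in> dom4" shows "pd 0 (C2 \<beta>) x * x$(0::4) * (x$0*x$1*x$3) = (x$0)^2*x$3-(x$1)^2*x$3-\<beta>*x$1*x$2"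
  unfolding pd_C2_0[OF a] using dom4D[OF a] by (simp add: field_simps power2_eq_square)

lemma xpd_C2_1: assumes a: "x \<in> dom4" shows "pd 1 (C2 \<beta>) x * x$(1::4) * (x$0*x$1*x$3) = (x$1)^2*x$3-(x$0)^2*x$3-x$0*(x$2)^2"
  unfolding pd_C2_1[OF a] using dom4D[OF a] by (simp add: field_simps power2_eq_square)

lemma xpd_C2_2: assumes a: "x \<in> dom4" shows "pd 2 (C2 \<beta>) x * x$(2::4) * (x$0*x$1*x$3) = 2*x$0*(x$2)^2+\<beta>*x$1*x$2"
  unfolding pd_C2_2[OF a] using dom4D[OF a] by (simp add: field_simps power2_eq_square)

lemma xpd_C2_3: assumes a: "x \<in> dom4" shows "pd 3 (C2 \<beta>) x * x$(3::4) * (x$0*x$1*x$3) = - (x$0*(x$2)^2)-\<beta>*x$1*x$2"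
  unfolding pd_C2_3[OF a] using dom4D[OF a] by (simp add: field_simps power2_eq_square)

lemma core01:
  fixes a b c d e p :: complex
  assumes "a \<noteq> 0" "b \<noteq> 0" "c \<noteq> 0" "d \<noteq> 0" "p * ((b*c)*(a*c*d)) = (a*d)*(a*d^2-a*c^2-e*b*c)*2 + (a*d)*(2*b^2*d+e*b*c)*1 + (a*d)*(a*c^2-a*d^2-b^2*d)*1 + (b^2-a*d-c^2)*(a*c^2-a*d^2-b^2*d)*1 + (b^2-a*d-c^2)*(a*d^2-a*c^2-e*b*c)*1 + (c^2-a*d-b^2)*(a*d^2-a*c^2-e*b*c)*1 + (a*d)*(- (b^2*d)-e*b*c)*(-2) + (b^2-a*d-c^2)*(- (b^2*d)-e*b*c)*(-1) + (c^2-a*d-b^2)*(- (b^2*d)-e*b*c)*(-1) + (c^2-a*d-b^2)*(2*b^2*d+e*b*c)*(-1) + (a*d)*(2*b^2*d+e*b*c)*(-1) + (a*d)*(a*c^2-a*d^2-b^2*d)*(-1)"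
  shows "p = (a * d + b^2 + c^2) / (b * c) * ((a * d^2 + b^2 * d + a * c^2 + e * b * c) / (a * c * d)) - 2 * ((a^2 * d + b^2 * d + a * c^2 + e * b * c) / (a * b * d))"
proof -
  have 1: "(a*d)*(a*d^2-a*c^2-e*b*c)*2 + (a*d)*(2*b^2*d+e*b*c)*1 + (a*d)*(a*c^2-a*d^2-b^2*d)*1 + (b^2-a*d-c^2)*(a*c^2-a*d^2-b^2*d)*1 + (b^2-a*d-c^2)*(a*d^2-a*c^2-e*b*c)*1 + (c^2-a*d-b^2)*(a*d^2-a*c^2-e*b*c)*1 + (a*d)*(- (b^2*d)-e*b*c)*(-2) + (b^2-a*d-c^2)*(- (b^2*d)-e*b*c)*(-1) + (c^2-a*d-b^2)*(- (b^2*d)-e*b*c)*(-1) + (c^2-a*d-b^2)*(2*b^2*d+e*b*c)*(-1) + (a*d)*(2*b^2*d+e*b*c)*(-1) + (a*d)*(a*c^2-a*d^2-b^2*d)*(-1) = (a*d+b^2+c^2)*(a*d^2+b^2*d+a*c^2+e*b*c) - 2*(a^2*d+b^2*d+a*c^2+e*b*c)*(c^2)"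
    by algebra
  have 2: "p = ((a*d+b^2+c^2)*(a*d^2+b^2*d+a*c^2+e*b*c) - 2*(a^2*d+b^2*d+a*c^2+e*b*c)*(c^2)) / ((b*c)*(a*c*d))"
    using assms(1-4) assms(5)[unfolded 1] by (simp add: eq_divide_eq)
  have 3: "((a*d+b^2+c^2)*(a*d^2+b^2*d+a*c^2+e*b*c) - 2*(a^2*d+b^2*d+a*c^2+e*b*c)*(c^2)) / ((b*c)*(a*c*d)) = (a * d + b^2 + c^2) / (b * c) * ((a * d^2 + b^2 * d + a * c^2 + e * b * c) / (a * c * d)) - 2 * ((a^2 * d + b^2 * d + a * c^2 + e * b * c) / (a * b * d))"
    using assms(1-4) by (simp add: field_simps power2_eq_square)
  show ?thesis using 2 3 by simp
qed

lemma B01: assumes "x \<in> dom4"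
  shows "PB (\<lambda>i. pd i (C0 \<beta>) x) (\<lambda>i. pd i (C1 \<beta>) x) x = C0 \<beta> x * C1 \<beta> x - 2 * C2 \<beta> x"
proof -
  have nz: "x$0 \<noteq> 0" "x$1 \<noteq> 0" "x$2 \<noteq> 0" "x$3 \<noteq> 0" using dom4D[OF assms] by auto
  have h: "PB (\<lambda>i. pd i (C0 \<beta>) x) (\<lambda>i. pd i (C1 \<beta>) x) x * ((x$1*x$2)*(x$0*x$2*x$3)) = (x$0*x$3)*(x$0*(x$3)^2-x$0*(x$2)^2-\<beta>*x$1*x$2)*2 + (x$0*x$3)*(2*(x$1)^2*x$3+\<beta>*x$1*x$2)*1 + (x$0*x$3)*(x$0*(x$2)^2-x$0*(x$3)^2-(x$1)^2*x$3)*1 + ((x$1)^2-x$0*x$3-(x$2)^2)*(x$0*(x$2)^2-x$0*(x$3)^2-(x$1)^2*x$3)*1 + ((x$1)^2-x$0*x$3-(x$2)^2)*(x$0*(x$3)^2-x$0*(x$2)^2-\<beta>*x$1*x$2)*1 + ((x$2)^2-x$0*x$3-(x$1)^2)*(x$0*(x$3)^2-x$0*(x$2)^2-\<beta>*x$1*x$2)*1 + (x$0*x$3)*(- ((x$1)^2*x$3)-\<beta>*x$1*x$2)*(-2) + ((x$1)^2-x$0*x$3-(x$2)^2)*(- ((x$1)^2*x$3)-\<beta>*x$1*x$2)*(-1) + ((x$2)^2-x$0*x$3-(x$1)^2)*(- ((x$1)^2*x$3)-\<beta>*x$1*x$2)*(-1) + ((x$2)^2-x$0*x$3-(x$1)^2)*(2*(x$1)^2*x$3+\<beta>*x$1*x$2)*(-1)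 + (x$0*x$3)*(2*(x$1)^2*x$3+\<beta>*x$1*x$2)*(-1) + (x$0*x$3)*(x$0*(x$2)^2-x$0*(x$3)^2-(x$1)^2*x$3)*(-1)"
    unfolding PB_scaled sum4 wvals xpd_C0_0[OF assms] xpd_C1_0[OF assms] xpd_C0_1[OF assms] xpd_C1_1[OF assms] xpd_C0_2[OF assms] xpd_C1_2[OF assms] xpd_C0_3[OF assms] xpd_C1_3[OF assms] by simp
  show ?thesis using core01[OF nz h] unfolding C0_def C1_def C2_def .
qed

lemma core12:
  fixes a b c d e p :: complex
  assumes "a \<noteq> 0" "b \<noteq> 0" "c \<noteq> 0" "d \<noteq> 0" "p * ((a*c*d)*(a*b*d)) = (- (b^2*d)-e*b*c)*(- (a*c^2)-e*b*c)*2 + (- (b^2*d)-e*b*c)*(b^2*d-a^2*d-a*c^2)*1 + (- (b^2*d)-e*b*c)*(2*a*c^2+e*b*c)*1 + (2*b^2*d+e*b*c)*(2*a*c^2+e*b*c)*1 + (2*b^2*d+e*b*c)*(- (a*c^2)-e*b*c)*1 + (a*c^2-a*d^2-b^2*d)*(- (a*c^2)-e*b*c)*1 + (a*d^2-a*c^2-e*b*c)*(a^2*d-b^2*d-e*b*c)*(-2) + (2*b^2*d+e*b*c)*(a^2*d-b^2*d-e*b*c)*(-1) + (a*c^2-a*d^2-b^2*d)*(a^2*d-b^2*d-e*b*c)*(-1) + (a*c^2-a*d^2-b^2*d)*(b^2*d-a^2*d-a*c^2)*(-1) + (a*d^2-a*c^2-e*b*c)*(b^2*d-a^2*d-a*c^2)*(-1)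 + (a*d^2-a*c^2-e*b*c)*(2*a*c^2+e*b*c)*(-1)"
  shows "p = (a * d^2 + b^2 * d + a * c^2 + e * b * c) / (a * c * d) * ((a^2 * d + b^2 * d + a * c^2 + e * b * c) / (a * b * d)) - 2 * ((a * d + b^2 + c^2) / (b * c))"
proof -
  have 1: "(- (b^2*d)-e*b*c)*(- (a*c^2)-e*b*c)*2 + (- (b^2*d)-e*b*c)*(b^2*d-a^2*d-a*c^2)*1 + (- (b^2*d)-e*b*c)*(2*a*c^2+e*b*c)*1 + (2*b^2*d+e*b*c)*(2*a*c^2+e*b*c)*1 + (2*b^2*d+e*b*c)*(- (a*c^2)-e*b*c)*1 + (a*c^2-a*d^2-b^2*d)*(- (a*c^2)-e*b*c)*1 + (a*d^2-a*c^2-e*b*c)*(a^2*d-b^2*d-e*b*c)*(-2) + (2*b^2*d+e*b*c)*(a^2*d-b^2*d-e*b*c)*(-1) + (a*c^2-a*d^2-b^2*d)*(a^2*d-b^2*d-e*b*c)*(-1) + (a*c^2-a*d^2-b^2*d)*(b^2*d-a^2*d-a*c^2)*(-1) + (a*d^2-a*c^2-e*b*c)*(b^2*d-a^2*d-a*c^2)*(-1) + (a*d^2-a*c^2-e*b*c)*(2*a*c^2+e*b*c)*(-1) = (a*d^2+b^2*d+a*c^2+e*b*c)*(a^2*d+b^2*d+a*c^2+e*b*c) - 2*(a*d+b^2+c^2)*(a^2*d^2)"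
    by algebra
  have 2: "p = ((a*d^2+b^2*d+a*c^2+e*b*c)*(a^2*d+b^2*d+a*c^2+e*b*c) - 2*(a*d+b^2+c^2)*(a^2*d^2)) / ((a*c*d)*(a*b*d))"
    using assms(1-4) assms(5)[unfolded 1] by (simp add: eq_divide_eq)
  have 3: "((a*d^2+b^2*d+a*c^2+e*b*c)*(a^2*d+b^2*d+a*c^2+e*b*c) - 2*(a*d+b^2+c^2)*(a^2*d^2)) / ((a*c*d)*(a*b*d)) = (a * d^2 + b^2 * d + a * c^2 + e * b * c) / (a * c * d) * ((a^2 * d + b^2 * d + a * c^2 + e * b * c) / (a * b * d)) - 2 * ((a * d + b^2 + c^2) / (b * c))"
    using assms(1-4) by (simp add: field_simps power2_eq_square)
  show ?thesis using 2 3 by simp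
qed

lemma B12: assumes "x \<in> dom4"
  shows "PB (\<lambda>i. pd i (C1 \<beta>) x) (\<lambda>i. pd i (C2 \<beta>) x) x = C1 \<beta> x * C2 \<beta> x - 2 * C0 \<beta> x"
proof -
  have nz: "x$0 \<noteq> 0" "x$1 \<noteq> 0" "x$2 \<noteq> 0" "x$3 \<noteq> 0" using dom4D[OF assms] by auto
  have h: "PB (\<lambda>i. pd i (C1 \<beta>) x) (\<lambda>i. pd i (C2 \<beta>) x) x * ((x$0*x$2*x$3)*(x$0*x$1*x$3)) = (- ((x$1)^2*x$3)-\<beta>*x$1*x$2)*(- (x$0*(x$2)^2)-\<beta>*x$1*x$2)*2 + (- ((x$1)^2*x$3)-\<beta>*x$1*x$2)*((x$1)^2*x$3-(x$0)^2*x$3-x$0*(x$2)^2)*1 + (- ((x$1)^2*x$3)-\<beta>*x$1*x$2)*(2*x$0*(x$2)^2+\<beta>*x$1*x$2)*1 + (2*(x$1)^2*x$3+\<beta>*x$1*x$2)*(2*x$0*(x$2)^2+\<beta>*x$1*x$2)*1 + (2*(x$1)^2*x$3+\<beta>*x$1*x$2)*(- (x$0*(x$2)^2)-\<beta>*x$1*x$2)*1 + (x$0*(x$2)^2-x$0*(x$3)^2-(x$1)^2*x$3)*(- (x$0*(x$2)^2)-\<beta>*x$1*x$2)*1 + (x$0*(x$3)^2-x$0*(x$2)^2-\<beta>*x$1*x$2)*((x$0)^2*x$3-(x$1)^2*x$3-\<beta>*x$1*x$2)*(-2) + (2*(x$1)^2*x$3+\<beta>*x$1*x$2)*((x$0)^2*x$3-(x$1)^2*x$3-\<beta>*x$1*x$2)*(-1)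 + (x$0*(x$2)^2-x$0*(x$3)^2-(x$1)^2*x$3)*((x$0)^2*x$3-(x$1)^2*x$3-\<beta>*x$1*x$2)*(-1) + (x$0*(x$2)^2-x$0*(x$3)^2-(x$1)^2*x$3)*((x$1)^2*x$3-(x$0)^2*x$3-x$0*(x$2)^2)*(-1) + (x$0*(x$3)^2-x$0*(x$2)^2-\<beta>*x$1*x$2)*((x$1)^2*x$3-(x$0)^2*x$3-x$0*(x$2)^2)*(-1) + (x$0*(x$3)^2-x$0*(x$2)^2-\<beta>*x$1*x$2)*(2*x$0*(x$2)^2+\<beta>*x$1*x$2)*(-1)"
    unfolding PB_scaled sum4 wvals xpd_C1_0[OF assms] xpd_C2_0[OF assms] xpd_C1_1[OF assms] xpd_C2_1[OF assms] xpd_C1_2[OF assms] xpd_C2_2[OF assms] xpd_C1_3[OF assms] xpd_C2_3[OF assms] by simp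
  show ?thesis using core12[OF nz h] unfolding C0_def C1_def C2_def .
qed

lemma core20:
  fixes a b c d e p :: complex
  assumes "a \<noteq> 0" "b \<noteq> 0" "c \<noteq> 0" "d \<noteq> 0" "p * ((a*b*d)*(b*c)) = (a^2*d-b^2*d-e*b*c)*(a*d)*2 + (a^2*d-b^2*d-e*b*c)*(b^2-a*d-c^2)*1 + (a^2*d-b^2*d-e*b*c)*(c^2-a*d-b^2)*1 + (b^2*d-a^2*d-a*c^2)*(c^2-a*d-b^2)*1 + (b^2*d-a^2*d-a*c^2)*(a*d)*1 + (2*a*c^2+e*b*c)*(a*d)*1 + (- (a*c^2)-e*b*c)*(a*d)*(-2) + (b^2*d-a^2*d-a*c^2)*(a*d)*(-1) + (2*a*c^2+e*b*c)*(a*d)*(-1) + (2*a*c^2+e*b*c)*(b^2-a*d-c^2)*(-1) + (- (a*c^2)-e*b*c)*(b^2-a*d-c^2)*(-1) + (- (a*c^2)-e*b*c)*(c^2-a*d-b^2)*(-1)"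
  shows "p = (a^2 * d + b^2 * d + a * c^2 + e * b * c) / (a * b * d) * ((a * d + b^2 + c^2) / (b * c)) - 2 * ((a * d^2 + b^2 * d + a * c^2 + e * b * c) / (a * c * d))"
proof -
  have 1: "(a^2*d-b^2*d-e*b*c)*(a*d)*2 + (a^2*d-b^2*d-e*b*c)*(b^2-a*d-c^2)*1 + (a^2*d-b^2*d-e*b*c)*(c^2-a*d-b^2)*1 + (b^2*d-a^2*d-a*c^2)*(c^2-a*d-b^2)*1 + (b^2*d-a^2*d-a*c^2)*(a*d)*1 + (2*a*c^2+e*b*c)*(a*d)*1 + (- (a*c^2)-e*b*c)*(a*d)*(-2) + (b^2*d-a^2*d-a*c^2)*(a*d)*(-1) + (2*a*c^2+e*b*c)*(a*d)*(-1) + (2*a*c^2+e*b*c)*(b^2-a*d-c^2)*(-1) + (- (a*c^2)-e*b*c)*(b^2-a*d-c^2)*(-1) + (- (a*c^2)-e*b*c)*(c^2-a*d-b^2)*(-1) = (a^2*d+b^2*d+a*c^2+e*b*c)*(a*d+b^2+c^2) - 2*(a*d^2+b^2*d+a*c^2+e*b*c)*(b^2)"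
    by algebra
  have 2: "p = ((a^2*d+b^2*d+a*c^2+e*b*c)*(a*d+b^2+c^2) - 2*(a*d^2+b^2*d+a*c^2+e*b*c)*(b^2)) / ((a*b*d)*(b*c))"
    using assms(1-4) assms(5)[unfolded 1] by (simp add: eq_divide_eq)
  have 3: "((a^2*d+b^2*d+a*c^2+e*b*c)*(a*d+b^2+c^2) - 2*(a*d^2+b^2*d+a*c^2+e*b*c)*(b^2)) / ((a*b*d)*(b*c)) = (a^2 * d + b^2 * d + a * c^2 + e * b * c) / (a * b * d) * ((a * d + b^2 + c^2) / (b * c)) - 2 * ((a * d^2 + b^2 * d + a * c^2 + e * b * c) / (a * c * d))"
    using assms(1-4) by (simp add: field_simps power2_eq_square)
  show ?thesis using 2 3 by simp
qed

lemma B20: assumes "x \<in> dom4"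
  shows "PB (\<lambda>i. pd i (C2 \<beta>) x) (\<lambda>i. pd i (C0 \<beta>) x) x = C2 \<beta> x * C0 \<beta> x - 2 * C1 \<beta> x"
proof -
  have nz: "x$0 \<noteq> 0" "x$1 \<noteq> 0" "x$2 \<noteq> 0" "x$3 \<noteq> 0" using dom4D[OF assms] by auto
  have h: "PB (\<lambda>i. pd i (C2 \<beta>) x) (\<lambda>i. pd i (C0 \<beta>) x) x * ((x$0*x$1*x$3)*(x$1*x$2)) = ((x$0)^2*x$3-(x$1)^2*x$3-\<beta>*x$1*x$2)*(x$0*x$3)*2 + ((x$0)^2*x$3-(x$1)^2*x$3-\<beta>*x$1*x$2)*((x$1)^2-x$0*x$3-(x$2)^2)*1 + ((x$0)^2*x$3-(x$1)^2*x$3-\<beta>*x$1*x$2)*((x$2)^2-x$0*x$3-(x$1)^2)*1 + ((x$1)^2*x$3-(x$0)^2*x$3-x$0*(x$2)^2)*((x$2)^2-x$0*x$3-(x$1)^2)*1 + ((x$1)^2*x$3-(x$0)^2*x$3-x$0*(x$2)^2)*(x$0*x$3)*1 + (2*x$0*(x$2)^2+\<beta>*x$1*x$2)*(x$0*x$3)*1 + (- (x$0*(x$2)^2)-\<beta>*x$1*x$2)*(x$0*x$3)*(-2) + ((x$1)^2*x$3-(x$0)^2*x$3-x$0*(x$2)^2)*(x$0*x$3)*(-1) + (2*x$0*(x$2)^2+\<beta>*x$1*x$2)*(x$0*x$3)*(-1) + (2*x$0*(x$2)^2+\<beta>*x$1*x$2)*((x$1)^2-x$0*x$3-(x$2)^2)*(-1)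 + (- (x$0*(x$2)^2)-\<beta>*x$1*x$2)*((x$1)^2-x$0*x$3-(x$2)^2)*(-1) + (- (x$0*(x$2)^2)-\<beta>*x$1*x$2)*((x$2)^2-x$0*x$3-(x$1)^2)*(-1)"
    unfolding PB_scaled sum4 wvals xpd_C2_0[OF assms] xpd_C0_0[OF assms] xpd_C2_1[OF assms] xpd_C0_1[OF assms] xpd_C2_2[OF assms] xpd_C0_2[OF assms] xpd_C2_3[OF assms] xpd_C0_3[OF assms] by simp
  show ?thesis using core20[OF nz h] unfolding C0_def C1_def C2_def .
qed


lemma pdJ1: assumes "x \<in> dom4"
  shows "pd i (J1 \<beta>) x = (C1 \<beta> x * C2 \<beta> x - 2 * C0 \<beta> x) * pd i (C0 \<beta>) x
     + (C0 \<beta> x * C2 \<beta> x - 2 * C1 \<beta> x) * pd i (C1 \<beta>) x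
     + (C0 \<beta> x * C1 \<beta> x - 2 * C2 \<beta> x) * pd i (C2 \<beta>) x"
proof -
  have "((\<lambda>t. J1 \<beta> (upd x i t)) has_field_derivative
     (C1 \<beta> x * C2 \<beta> x - 2 * C0 \<beta> x) * pd i (C0 \<beta>) x
     + (C0 \<beta> x * C2 \<beta> x - 2 * C1 \<beta> x) * pd i (C1 \<beta>) x
     + (C0 \<beta> x * C1 \<beta> x - 2 * C2 \<beta> x) * pd i (C2 \<beta>) x) (at (x$i))"
    unfolding J1_def
    by (rule derivative_eq_intros has_C0[OF assms] has_C1[OF assms] has_C2[OF assms] refl)+
       (simp add: algebra_simps power2_eq_square)
  from DERIV_imp_deriv[OF this[unfolded upd_def]] show ?thesis
    unfolding pd_def[of i "J1 \<beta>" x] .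
qed

lemma pdJ2: assumes "x \<in> dom4"
  shows "pd i (J2 \<beta>) x = 1 * pd i (C0 \<beta>) x + 1 * pd i (C1 \<beta>) x + 1 * pd i (C2 \<beta>) x"
proof -
  have "((\<lambda>t. J2 \<beta> (upd x i t)) has_field_derivative
     1 * pd i (C0 \<beta>) x + 1 * pd i (C1 \<beta>) x + 1 * pd i (C2 \<beta>) x) (at (x$i))"
    unfolding J2_def
    by (rule derivative_eq_intros has_C0[OF assms] has_C1[OF assms] has_C2[OF assms] refl)+
       (simp add: algebra_simps)
  from DERIV_imp_deriv[OF this[unfolded upd_def]] show ?thesis
    unfolding pd_def[of i "J2 \<beta>" x] .
qed

lemma pdJ3: assumes "x \<in> dom4"
  shows "pd i (J3 \<beta>) x = (C1 \<beta> x * C2 \<beta> x) * pd i (C0 \<beta>) x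
     + (C0 \<beta> x * C2 \<beta> x) * pd i (C1 \<beta>) x
     + (C0 \<beta> x * C1 \<beta> x) * pd i (C2 \<beta>) x"
proof -
  have "((\<lambda>t. J3 \<beta> (upd x i t)) has_field_derivative
     (C1 \<beta> x * C2 \<beta> x) * pd i (C0 \<beta>) x
     + (C0 \<beta> x * C2 \<beta> x) * pd i (C1 \<beta>) x
     + (C0 \<beta> x * C1 \<beta> x) * pd i (C2 \<beta>) x) (at (x$i))"
    unfolding J3_def
    by (rule derivative_eq_intros has_C0[OF assms] has_C1[OF assms] has_C2[OF assms] refl)+
       (simp add: algebra_simps)
  from DERIV_imp_deriv[OF this[unfolded upd_def]] show ?thesis
    unfolding pd_def[of i "J3 \<beta>" x] .
qed

lemma bracket_J: assumes "x \<in> dom4"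
  shows "pbracket (J1 \<beta>) (J2 \<beta>) x = 0 \<and> pbracket (J1 \<beta>) (J3 \<beta>) x = 0"
proof -
  define u0 where "u0 = (\<lambda>i. pd i (C0 \<beta>) x)"
  define u1 where "u1 = (\<lambda>i. pd i (C1 \<beta>) x)"
  define u2 where "u2 = (\<lambda>i. pd i (C2 \<beta>) x)"
  have f1: "(\<lambda>i. pd i (J1 \<beta>) x) = (\<lambda>i. (C1 \<beta> x * C2 \<beta> x - 2 * C0 \<beta> x) * u0 i
     + (C0 \<beta> x * C2 \<beta> x - 2 * C1 \<beta> x) * u1 i + (C0 \<beta> x * C1 \<beta> x - 2 * C2 \<beta> x) * u2 i)"
    unfolding u0_def u1_def u2_def by (rule ext) (rule pdJ1[OF assms])
  have f2: "(\<lambda>i. pd i (J2 \<beta>) x) = (\<lambda>i. 1 * u0 i + 1 * u1 i + 1 * u2 i)"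
    unfolding u0_def u1_def u2_def by (rule ext) (rule pdJ2[OF assms])
  have f3: "(\<lambda>i. pd i (J3 \<beta>) x) = (\<lambda>i. (C1 \<beta> x * C2 \<beta> x) * u0 i
     + (C0 \<beta> x * C2 \<beta> x) * u1 i + (C0 \<beta> x * C1 \<beta> x) * u2 i)"
    unfolding u0_def u1_def u2_def by (rule ext) (rule pdJ3[OF assms])
  have b01: "PB u0 u1 x = C0 \<beta> x * C1 \<beta> x - 2 * C2 \<beta> x"
    unfolding u0_def u1_def by (rule B01[OF assms])
  have b12: "PB u1 u2 x = C1 \<beta> x * C2 \<beta> x - 2 * C0 \<beta> x"
    unfolding u1_def u2_def by (rule B12[OF assms])
  have b20: "PB u2 u0 x = C2 \<beta> x * C0 \<beta> x - 2 * C1 \<beta> x"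
    unfolding u0_def u2_def by (rule B20[OF assms])
  have b10: "PB u1 u0 x = - (C0 \<beta> x * C1 \<beta> x - 2 * C2 \<beta> x)"
    using PB_anti[of u1 u0 x] b01 by simp
  have b21: "PB u2 u1 x = - (C1 \<beta> x * C2 \<beta> x - 2 * C0 \<beta> x)"
    using PB_anti[of u2 u1 x] b12 by simp
  have b02: "PB u0 u2 x = - (C2 \<beta> x * C0 \<beta> x - 2 * C1 \<beta> x)"
    using PB_anti[of u0 u2 x] b20 by simp
  note bs = b01 b12 b20 b10 b21 b02 PB_self
  show ?thesis
    unfolding pbracket_PB f1 f2 f3 PB_linl PB_linr bs
    by (intro conjI; algebra)
qed


lemma key_generic:
  fixes a b c d e f g h :: complex
  assumes nz: "a \<noteq> 0" "b \<noteq> 0" "c \<noteq> 0" "d \<noteq> 0"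
    and r1: "f * a = d * b + e * c" and r2: "g * b = f * c + e * d" and r3: "h * c = g * d + e * f"
  shows "h - ((a * d + b^2 + c^2) / (b * c) * ((a * d^2 + b^2 * d + a * c^2 + e * b * c) / (a * c * d))
          * ((a^2 * d + b^2 * d + a * c^2 + e * b * c) / (a * b * d))
          - ((a * d + b^2 + c^2) / (b * c))^2 - ((a * d^2 + b^2 * d + a * c^2 + e * b * c) / (a * c * d))^2
          - ((a^2 * d + b^2 * d + a * c^2 + e * b * c) / (a * b * d))^2 + 2) * d + a
         = - e * ((a * d + b^2 + c^2) / (b * c))"
proof -
  have f: "f = (d * b + e * c) / a" using r1 nz by (simp add: eq_divide_eq)
  have g: "g = (f * c + e * d) / b" using r2 nz by (simp add: eq_divide_eq)
  have h: "h = (g * d + e * f) / c" using r3 nz by (simp add: eq_divide_eq)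
  show ?thesis unfolding h g f using nz by (simp add: field_simps power2_eq_square)
qed

lemma rot_generic:
  fixes a b c d e y :: complex
  assumes nz: "a \<noteq> 0" "b \<noteq> 0" "c \<noteq> 0" "d \<noteq> 0" "y \<noteq> 0" and r: "y * a = b * d + e * c"
  shows "(b * y + c^2 + d^2) / (c * d) = (a * d^2 + b^2 * d + a * c^2 + e * b * c) / (a * c * d)"
    and "(b * y^2 + c^2 * y + b * d^2 + e * c * d) / (b * d * y) = (a^2 * d + b^2 * d + a * c^2 + e * b * c) / (a * b * d)"
    and "(b^2 * y + c^2 * y + b * d^2 + e * c * d) / (b * c * y) = (a * d + b^2 + c^2) / (b * c)"
proof -
  have y: "y = (b * d + e * c) / a" using r nz by (simp add: eq_divide_eq)
  show "(b * y + c^2 + d^2) / (c * d) = (a * d^2 + b^2 * d + a * c^2 + e * b * c) / (a * c * d)"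
    unfolding y using nz by (simp add: field_simps power2_eq_square)
  have "b * y^2 + c^2 * y + b * d^2 + e * c * d = y * (b * y + c^2 + a * d)"
    using r by algebra
  then have "(b * y^2 + c^2 * y + b * d^2 + e * c * d) / (b * d * y) = (b * y + c^2 + a * d) / (b * d)"
    using nz by simp
  also have "\<dots> = (a^2 * d + b^2 * d + a * c^2 + e * b * c) / (a * b * d)"
    unfolding y using nz by (simp add: field_simps power2_eq_square)
  finally show "(b * y^2 + c^2 * y + b * d^2 + e * c * d) / (b * d * y) = (a^2 * d + b^2 * d + a * c^2 + e * b * c) / (a * b * d)" .
  have "b^2 * y + c^2 * y + b * d^2 + e * c * d = y * (a * d + b^2 + c^2)"
    using r by algebra
  then show "(b^2 * y + c^2 * y + b * d^2 + e * c * d) / (b * c * y) = (a * d + b^2 + c^2) / (b * c)"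
    using nz by simp
qed

lemma phi_comp: "(phi \<beta> x)$0 = x$1" "(phi \<beta> x)$1 = x$2" "(phi \<beta> x)$2 = x$3"
  "(phi \<beta> x)$3 * x$0 = x$1 * x$3 + \<beta> * x$2 \<or> x$0 = 0"
  by (simp_all add: phi_def)

lemma rotC: assumes "x \<in> dom4" "phi \<beta> x \<in> dom4"
  shows "C0 \<beta> (phi \<beta> x) = C1 \<beta> x" "C1 \<beta> (phi \<beta> x) = C2 \<beta> x" "C2 \<beta> (phi \<beta> x) = C0 \<beta> x"
proof -
  have nz: "x$0 \<noteq> 0" "x$1 \<noteq> 0" "x$2 \<noteq> 0" "x$3 \<noteq> 0" using dom4D[OF assms(1)] by auto
  have ny: "(phi \<beta> x)$3 \<noteq> 0" using dom4D[OF assms(2)] by auto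
  have r: "(phi \<beta> x)$3 * x$0 = x$1 * x$3 + \<beta> * x$2" using phi_comp(4)[of \<beta> x] nz by auto
  note g = rot_generic[OF nz ny r]
  show "C0 \<beta> (phi \<beta> x) = C1 \<beta> x" unfolding C0_def C1_def phi_comp(1-3) by (rule g(1))
  show "C1 \<beta> (phi \<beta> x) = C2 \<beta> x" unfolding C1_def C2_def phi_comp(1-3) by (rule g(2))
  show "C2 \<beta> (phi \<beta> x) = C0 \<beta> x" unfolding C0_def C2_def phi_comp(1-3) by (rule g(3))
qed

lemma conserved: assumes "x \<in> dom4" "phi \<beta> x \<in> dom4"
  shows "J1 \<beta> (phi \<beta> x) = J1 \<beta> x \<and> J2 \<beta> (phi \<beta> x) = J2 \<beta> x \<and> J3 \<beta> (phi \<beta> x) = J3 \<beta> x"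
  unfolding J1_def J2_def J3_def rotC[OF assms] by (simp add: algebra_simps)


lemma indep_0: assumes b: "\<beta> = 0"
  shows "\<exists>x\<in>dom4. \<forall>a b c :: complex.
        a *s grad (J1 \<beta>) x + b *s grad (J2 \<beta>) x + c *s grad (J3 \<beta>) x = 0
          \<longrightarrow> a = 0 \<and> b = 0 \<and> c = 0"
proof -
  define p :: "complex^4" where "p = (\<chi> i. if i = 3 then 3 * 1 else 1)"
  have snz: "(1::complex) \<noteq> 0" using b by simp
  have pc: "p$0 = 1" "p$1 = 1" "p$2 = 1" "p$3 = 3 * 1" by (simp_all add: p_def)
  have pdom: "p \<in> dom4" unfolding dom4_def p_def using snz by simp
  have Cv: "C0 \<beta> p = (5)" "C1 \<beta> p = (13/3)" "C2 \<beta> p = (7/3)"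
    unfolding C0_def C1_def C2_def pc using b snz by (simp_all add: field_simps power2_eq_square)
  have pv00: "pd 0 (C0 \<beta>) p = (3) / 1"
    unfolding pd_C0_0[OF pdom] pc using b snz by (simp add: field_simps power2_eq_square)
  have pv01: "pd 1 (C0 \<beta>) p = (- 3) / 1"
    unfolding pd_C0_1[OF pdom] pc using b snz by (simp add: field_simps power2_eq_square)
  have pv02: "pd 2 (C0 \<beta>) p = (- 3) / 1"
    unfolding pd_C0_2[OF pdom] pc using b snz by (simp add: field_simps power2_eq_square)
  have pv03: "pd 3 (C0 \<beta>) p = (1) / 1"
    unfolding pd_C0_3[OF pdom] pc using b snz by (simp add: field_simps power2_eq_square)
  have pv10: "pd 0 (C1 \<beta>) p = (- 1) / 1"
    unfolding pd_C1_0[OF pdom] pc using b snz by (simp add: field_simps power2_eq_square)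
  have pv11: "pd 1 (C1 \<beta>) p = (2) / 1"
    unfolding pd_C1_1[OF pdom] pc using b snz by (simp add: field_simps power2_eq_square)
  have pv12: "pd 2 (C1 \<beta>) p = (- 11/3) / 1"
    unfolding pd_C1_2[OF pdom] pc using b snz by (simp add: field_simps power2_eq_square)
  have pv13: "pd 3 (C1 \<beta>) p = (8/9) / 1"
    unfolding pd_C1_3[OF pdom] pc using b snz by (simp add: field_simps power2_eq_square)
  have pv20: "pd 0 (C2 \<beta>) p = (0) / 1"
    unfolding pd_C2_0[OF pdom] pc using b snz by (simp add: field_simps power2_eq_square)
  have pv21: "pd 1 (C2 \<beta>) p = (- 1/3) / 1"
    unfolding pd_C2_1[OF pdom] pc using b snz by (simp add: field_simps power2_eq_square)
  have pv22: "pd 2 (C2 \<beta>) p = (2/3) / 1"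
    unfolding pd_C2_2[OF pdom] pc using b snz by (simp add: field_simps power2_eq_square)
  have pv23: "pd 3 (C2 \<beta>) p = (- 1/9) / 1"
    unfolding pd_C2_3[OF pdom] pc using b snz by (simp add: field_simps power2_eq_square)
  have jv00: "pd 0 (J1 \<beta>) p = (- 8/3) / 1"
    unfolding pdJ1[OF pdom] Cv pv00 pv10 pv20 using snz by (simp add: field_simps)
  have jv01: "pd 1 (J1 \<beta>) p = (0) / 1"
    unfolding pdJ1[OF pdom] Cv pv01 pv11 pv21 using snz by (simp add: field_simps)
  have jv02: "pd 2 (J1 \<beta>) p = (0) / 1"
    unfolding pdJ1[OF pdom] Cv pv02 pv12 pv22 using snz by (simp add: field_simps)
  have jv03: "pd 3 (J1 \<beta>) p = (8/9) / 1"
    unfolding pdJ1[OF pdom] Cv pv03 pv13 pv23 using snz by (simp add: field_simps)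
  have jv10: "pd 0 (J2 \<beta>) p = (2) / 1"
    unfolding pdJ2[OF pdom] Cv pv00 pv10 pv20 using snz by (simp add: field_simps)
  have jv11: "pd 1 (J2 \<beta>) p = (- 4/3) / 1"
    unfolding pdJ2[OF pdom] Cv pv01 pv11 pv21 using snz by (simp add: field_simps)
  have jv12: "pd 2 (J2 \<beta>) p = (- 6) / 1"
    unfolding pdJ2[OF pdom] Cv pv02 pv12 pv22 using snz by (simp add: field_simps)
  have jv13: "pd 3 (J2 \<beta>) p = (16/9) / 1"
    unfolding pdJ2[OF pdom] Cv pv03 pv13 pv23 using snz by (simp add: field_simps)
  have jv20: "pd 0 (J3 \<beta>) p = (56/3) / 1"
    unfolding pdJ3[OF pdom] Cv pv00 pv10 pv20 using snz by (simp add: field_simps)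
  have jv21: "pd 1 (J3 \<beta>) p = (- 128/9) / 1"
    unfolding pdJ3[OF pdom] Cv pv01 pv11 pv21 using snz by (simp add: field_simps)
  have jv22: "pd 2 (J3 \<beta>) p = (- 176/3) / 1"
    unfolding pdJ3[OF pdom] Cv pv02 pv12 pv22 using snz by (simp add: field_simps)
  have jv23: "pd 3 (J3 \<beta>) p = (488/27) / 1"
    unfolding pdJ3[OF pdom] Cv pv03 pv13 pv23 using snz by (simp add: field_simps)
  show ?thesis
  proof (intro bexI[OF _ pdom] allI impI)
    fix a b c :: complex
    assume H: "a *s grad (J1 \<beta>) p + b *s grad (J2 \<beta>) p + c *s grad (J3 \<beta>) p = 0"
    have E: "a * pd i (J1 \<beta>) p + b * pd i (J2 \<beta>) p + c * pd i (J3 \<beta>) p = 0" for i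
    proof -
      have "(a *s grad (J1 \<beta>) p + b *s grad (J2 \<beta>) p + c *s grad (J3 \<beta>) p)$i = (0::complex^4)$i"
        using H by simp
      then show ?thesis by (simp add: grad_def)
    qed
    have e0: "a * (- 8/3) + b * (2) + c * (56/3) = 0"
    proof -
      have "a * (- 8/3) + b * (2) + c * (56/3) = 1 * (a * ((- 8/3) / 1) + b * ((2) / 1) + c * ((56/3) / 1))"
        using snz by (simp add: field_simps)
      also have "\<dots> = 0" using E[of 0] unfolding jv00 jv10 jv20 by simp
      finally show ?thesis .
    qed
    have e1: "a * (0) + b * (- 4/3) + c * (- 128/9) = 0"
    proof -
      have "a * (0) + b * (- 4/3) + c * (- 128/9) = 1 * (a * ((0) / 1) + b * ((- 4/3) / 1) + c * ((- 128/9) / 1))"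
        using snz by (simp add: field_simps)
      also have "\<dots> = 0" using E[of 1] unfolding jv01 jv11 jv21 by simp
      finally show ?thesis .
    qed
    have e2: "a * (0) + b * (- 6) + c * (- 176/3) = 0"
    proof -
      have "a * (0) + b * (- 6) + c * (- 176/3) = 1 * (a * ((0) / 1) + b * ((- 6) / 1) + c * ((- 176/3) / 1))"
        using snz by (simp add: field_simps)
      also have "\<dots> = 0" using E[of 2] unfolding jv02 jv12 jv22 by simp
      finally show ?thesis .
    qed
    have "a = (- 3/8) * (a * (- 8/3) + b * (2) + c * (56/3)) + (9/32) * (a * (0) + b * (- 4/3) + c * (- 128/9)) + (- 3/16) * (a * (0) + b * (- 6) + c * (- 176/3))"
      by (simp add: algebra_simps)
    then have a0: "a = 0" unfolding e0 e1 e2 by simp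
    have "b = (0) * (a * (- 8/3) + b * (2) + c * (56/3)) + (33/4) * (a * (0) + b * (- 4/3) + c * (- 128/9)) + (- 2) * (a * (0) + b * (- 6) + c * (- 176/3))"
      by (simp add: algebra_simps)
    then have b0: "b = 0" unfolding e0 e1 e2 by simp
    have "c = (0) * (a * (- 8/3) + b * (2) + c * (56/3)) + (- 27/32) * (a * (0) + b * (- 4/3) + c * (- 128/9)) + (3/16) * (a * (0) + b * (- 6) + c * (- 176/3))"
      by (simp add: algebra_simps)
    then have c0: "c = 0" unfolding e0 e1 e2 by simp
    show "a = 0 \<and> b = 0 \<and> c = 0" using a0 b0 c0 by simp
  qed
qed

lemma indep_1: assumes b: "\<beta> \<noteq> 0"
  shows "\<exists>x\<in>dom4. \<forall>a b c :: complex.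
        a *s grad (J1 \<beta>) x + b *s grad (J2 \<beta>) x + c *s grad (J3 \<beta>) x = 0
          \<longrightarrow> a = 0 \<and> b = 0 \<and> c = 0"
proof -
  define p :: "complex^4" where "p = (\<chi> i. if i = 3 then 3 * \<beta> else \<beta>)"
  have snz: "(\<beta>::complex) \<noteq> 0" using b by simp
  have pc: "p$0 = \<beta>" "p$1 = \<beta>" "p$2 = \<beta>" "p$3 = 3 * \<beta>" by (simp_all add: p_def)
  have pdom: "p \<in> dom4" unfolding dom4_def p_def using snz by simp
  have Cv: "C0 \<beta> p = (5)" "C1 \<beta> p = (14/3)" "C2 \<beta> p = (8/3)"
    unfolding C0_def C1_def C2_def pc using b snz by (simp_all add: field_simps power2_eq_square)
  have pv00: "pd 0 (C0 \<beta>) p = (3) / \<beta>"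
    unfolding pd_C0_0[OF pdom] pc using b snz by (simp add: field_simps power2_eq_square)
  have pv01: "pd 1 (C0 \<beta>) p = (- 3) / \<beta>"
    unfolding pd_C0_1[OF pdom] pc using b snz by (simp add: field_simps power2_eq_square)
  have pv02: "pd 2 (C0 \<beta>) p = (- 3) / \<beta>"
    unfolding pd_C0_2[OF pdom] pc using b snz by (simp add: field_simps power2_eq_square)
  have pv03: "pd 3 (C0 \<beta>) p = (1) / \<beta>"
    unfolding pd_C0_3[OF pdom] pc using b snz by (simp add: field_simps power2_eq_square)
  have pv10: "pd 0 (C1 \<beta>) p = (- 4/3) / \<beta>"
    unfolding pd_C1_0[OF pdom] pc using b snz by (simp add: field_simps power2_eq_square)
  have pv11: "pd 1 (C1 \<beta>) p = (7/3) / \<beta>"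
    unfolding pd_C1_1[OF pdom] pc using b snz by (simp add: field_simps power2_eq_square)
  have pv12: "pd 2 (C1 \<beta>) p = (- 11/3) / \<beta>"
    unfolding pd_C1_2[OF pdom] pc using b snz by (simp add: field_simps power2_eq_square)
  have pv13: "pd 3 (C1 \<beta>) p = (7/9) / \<beta>"
    unfolding pd_C1_3[OF pdom] pc using b snz by (simp add: field_simps power2_eq_square)
  have pv20: "pd 0 (C2 \<beta>) p = (- 1/3) / \<beta>"
    unfolding pd_C2_0[OF pdom] pc using b snz by (simp add: field_simps power2_eq_square)
  have pv21: "pd 1 (C2 \<beta>) p = (- 1/3) / \<beta>"
    unfolding pd_C2_1[OF pdom] pc using b snz by (simp add: field_simps power2_eq_square)
  have pv22: "pd 2 (C2 \<beta>) p = (1) / \<beta>"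
    unfolding pd_C2_2[OF pdom] pc using b snz by (simp add: field_simps power2_eq_square)
  have pv23: "pd 3 (C2 \<beta>) p = (- 2/9) / \<beta>"
    unfolding pd_C2_3[OF pdom] pc using b snz by (simp add: field_simps power2_eq_square)
  have jv00: "pd 0 (J1 \<beta>) p = (- 4) / \<beta>"
    unfolding pdJ1[OF pdom] Cv pv00 pv10 pv20 using snz by (simp add: field_simps)
  have jv01: "pd 1 (J1 \<beta>) p = (- 4) / \<beta>"
    unfolding pdJ1[OF pdom] Cv pv01 pv11 pv21 using snz by (simp add: field_simps)
  have jv02: "pd 2 (J1 \<beta>) p = (- 4) / \<beta>"
    unfolding pdJ1[OF pdom] Cv pv02 pv12 pv22 using snz by (simp add: field_simps)
  have jv03: "pd 3 (J1 \<beta>) p = (14/9) / \<beta>"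
    unfolding pdJ1[OF pdom] Cv pv03 pv13 pv23 using snz by (simp add: field_simps)
  have jv10: "pd 0 (J2 \<beta>) p = (4/3) / \<beta>"
    unfolding pdJ2[OF pdom] Cv pv00 pv10 pv20 using snz by (simp add: field_simps)
  have jv11: "pd 1 (J2 \<beta>) p = (- 1) / \<beta>"
    unfolding pdJ2[OF pdom] Cv pv01 pv11 pv21 using snz by (simp add: field_simps)
  have jv12: "pd 2 (J2 \<beta>) p = (- 17/3) / \<beta>"
    unfolding pdJ2[OF pdom] Cv pv02 pv12 pv22 using snz by (simp add: field_simps)
  have jv13: "pd 3 (J2 \<beta>) p = (14/9) / \<beta>"
    unfolding pdJ2[OF pdom] Cv pv03 pv13 pv23 using snz by (simp add: field_simps)
  have jv20: "pd 0 (J3 \<beta>) p = (106/9) / \<beta>"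
    unfolding pdJ3[OF pdom] Cv pv00 pv10 pv20 using snz by (simp add: field_simps)
  have jv21: "pd 1 (J3 \<beta>) p = (- 14) / \<beta>"
    unfolding pdJ3[OF pdom] Cv pv01 pv11 pv21 using snz by (simp add: field_simps)
  have jv22: "pd 2 (J3 \<beta>) p = (- 566/9) / \<beta>"
    unfolding pdJ3[OF pdom] Cv pv02 pv12 pv22 using snz by (simp add: field_simps)
  have jv23: "pd 3 (J3 \<beta>) p = (476/27) / \<beta>"
    unfolding pdJ3[OF pdom] Cv pv03 pv13 pv23 using snz by (simp add: field_simps)
  show ?thesis
  proof (intro bexI[OF _ pdom] allI impI)
    fix a b c :: complex
    assume H: "a *s grad (J1 \<beta>) p + b *s grad (J2 \<beta>) p + c *s grad (J3 \<beta>) p = 0"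
    have E: "a * pd i (J1 \<beta>) p + b * pd i (J2 \<beta>) p + c * pd i (J3 \<beta>) p = 0" for i
    proof -
      have "(a *s grad (J1 \<beta>) p + b *s grad (J2 \<beta>) p + c *s grad (J3 \<beta>) p)$i = (0::complex^4)$i"
        using H by simp
      then show ?thesis by (simp add: grad_def)
    qed
    have e0: "a * (- 4) + b * (4/3) + c * (106/9) = 0"
    proof -
      have "a * (- 4) + b * (4/3) + c * (106/9) = \<beta> * (a * ((- 4) / \<beta>) + b * ((4/3) / \<beta>) + c * ((106/9) / \<beta>))"
        using snz by (simp add: field_simps)
      also have "\<dots> = 0" using E[of 0] unfolding jv00 jv10 jv20 by simp
      finally show ?thesis .
    qed
    have e1: "a * (- 4) + b * (- 1) + c * (- 14) = 0"
    proof -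
      have "a * (- 4) + b * (- 1) + c * (- 14) = \<beta> * (a * ((- 4) / \<beta>) + b * ((- 1) / \<beta>) + c * ((- 14) / \<beta>))"
        using snz by (simp add: field_simps)
      also have "\<dots> = 0" using E[of 1] unfolding jv01 jv11 jv21 by simp
      finally show ?thesis .
    qed
    have e2: "a * (- 4) + b * (- 17/3) + c * (- 566/9) = 0"
    proof -
      have "a * (- 4) + b * (- 17/3) + c * (- 566/9) = \<beta> * (a * ((- 4) / \<beta>) + b * ((- 17/3) / \<beta>) + c * ((- 566/9) / \<beta>))"
        using snz by (simp add: field_simps)
      also have "\<dots> = 0" using E[of 2] unfolding jv02 jv12 jv22 by simp
      finally show ?thesis .
    qed
    have "a = (- 37/56) * (a * (- 4) + b * (4/3) + c * (106/9)) + (11/16) * (a * (- 4) + b * (- 1) + c * (- 14)) + (- 31/112) * (a * (- 4) + b * (- 17/3) + c * (- 566/9))"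
      by (simp add: algebra_simps)
    then have a0: "a = 0" unfolding e0 e1 e2 by simp
    have "b = (- 55/7) * (a * (- 4) + b * (4/3) + c * (106/9)) + (12) * (a * (- 4) + b * (- 1) + c * (- 14)) + (- 29/7) * (a * (- 4) + b * (- 17/3) + c * (- 566/9))"
      by (simp add: algebra_simps)
    then have b0: "b = 0" unfolding e0 e1 e2 by simp
    have "c = (3/4) * (a * (- 4) + b * (4/3) + c * (106/9)) + (- 9/8) * (a * (- 4) + b * (- 1) + c * (- 14)) + (3/8) * (a * (- 4) + b * (- 17/3) + c * (- 566/9))"
      by (simp add: algebra_simps)
    then have c0: "c = 0" unfolding e0 e1 e2 by simp
    show "a = 0 \<and> b = 0 \<and> c = 0" using a0 b0 c0 by simp
  qed
qed

lemma indep: "\<exists>x\<in>dom4. \<forall>a b c :: complex.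
        a *s grad (J1 \<beta>) x + b *s grad (J2 \<beta>) x + c *s grad (J3 \<beta>) x = 0
          \<longrightarrow> a = 0 \<and> b = 0 \<and> c = 0"
  using indep_0 indep_1 by blast



definition Sq :: "(nat \<Rightarrow> complex) \<Rightarrow> nat \<Rightarrow> complex^4" where
  "Sq x n = init4 (\<lambda>k. x (n + k))"

lemma Sq_comp: "(Sq x n)$0 = x n" "(Sq x n)$1 = x (n+1)" "(Sq x n)$2 = x (n+2)" "(Sq x n)$3 = x (n+3)"
  by (simp_all add: Sq_def init4_def)

lemma Sq0: "Sq x 0 = init4 x"
  by (simp add: Sq_def)

lemma Sq_dom: assumes "\<forall>n. x n \<noteq> 0" shows "Sq x n \<in> dom4"
proof -
  have "(Sq x n)$i \<noteq> 0" for i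
    using exhaust4[of i] assms by (auto simp: Sq_comp)
  then show ?thesis by (simp add: dom4_def)
qed

lemma Sq_step:
  assumes nz: "\<forall>n. x n \<noteq> 0"
    and rec: "\<forall>n. x (n + 4) * x n = x (n + 3) * x (n + 1) + \<beta> * x (n + 2)"
  shows "Sq x (Suc n) = phi \<beta> (Sq x n)"
proof -
  have x4: "x (n + 4) = (x (n + 1) * x (n + 3) + \<beta> * x (n + 2)) / x n"
    using rec[rule_format, of n] nz[rule_format, of n] by (simp add: eq_divide_eq mult.commute)
  have "(Sq x (Suc n))$i = (phi \<beta> (Sq x n))$i" for i
  proof -
    have "i = 0 \<or> i = 1 \<or> i = 2 \<or> i = 3" by (rule exhaust4)
    then show ?thesis
    proof (elim disjE)
      assume "i = 3"
      then show ?thesis unfolding phi_def using x4 by (simp add: Sq_comp eval_nat_numeral)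
    qed (simp_all add: phi_def Sq_comp eval_nat_numeral)
  qed
  then show ?thesis by (simp add: vec_eq_iff)
qed

lemma cheb_sol:
  fixes y :: "nat \<Rightarrow> complex"
  assumes J: "J \<noteq> 0" "J \<noteq> 2"
    and r: "\<And>m. y (Suc (Suc m)) = J * y (Suc m) - y m - \<beta> * K"
  shows "y n = (2 * y 0 - 2 * y 1 / J - 2 * \<beta> * K * (J - 1) / (J * (J - 2))) * chebT n (J / 2)
              + (- y 0 + (2 * y 1 + \<beta> * K) / J) * chebU n (J / 2) + \<beta> * K / (J - 2)"
proof -
  define A where "A = 2 * y 0 - 2 * y 1 / J - 2 * \<beta> * K * (J - 1) / (J * (J - 2))"
  define B where "B = - y 0 + (2 * y 1 + \<beta> * K) / J"
  define c where "c = \<beta> * K / (J - 2)"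
  have J2: "J - 2 \<noteq> 0" using J by simp
  have cJ: "\<beta> * K = c * (J - 2)" unfolding c_def using J2 by simp
  have hJ: "2 * (J / 2) = J" by simp
  have P: "y m = A * chebT m (J/2) + B * chebU m (J/2) + c \<and>
           y (Suc m) = A * chebT (Suc m) (J/2) + B * chebU (Suc m) (J/2) + c" for m
  proof (induction m)
    case 0
    have Ae: "A = 2 * y 0 - 2 * y 1 / J - 2 * c * (J - 1) / J"
    proof -
      have "2 * \<beta> * K * (J - 1) / (J * (J - 2)) = 2 * c * (J - 1) / J"
        unfolding c_def using J J2 by (simp add: field_simps)
      then show ?thesis unfolding A_def by simp
    qed
    have Be: "B = - y 0 + (2 * y 1 + c * (J - 2)) / J"
      unfolding B_def cJ ..
    have "y 0 = A * chebT 0 (J/2) + B * chebU 0 (J/2) + c"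
      unfolding Ae Be using J by (simp add: field_simps)
    moreover have "y 1 = A * chebT 1 (J/2) + B * chebU 1 (J/2) + c"
      unfolding Ae Be using J by (simp add: field_simps One_nat_def)
    ultimately show ?case by simp
  next
    case (Suc m)
    have "y (Suc (Suc m)) = J * y (Suc m) - y m - \<beta> * K" by (rule r)
    also have "\<dots> = J * (A * chebT (Suc m) (J/2) + B * chebU (Suc m) (J/2) + c)
                    - (A * chebT m (J/2) + B * chebU m (J/2) + c) - c * (J - 2)"
      using Suc.IH cJ by simp
    also have "\<dots> = A * chebT (Suc (Suc m)) (J/2) + B * chebU (Suc (Suc m)) (J/2) + c"
      unfolding chebT.simps chebU.simps hJ by (simp add: algebra_simps)
    finally show ?case using Suc.IH by simp
  qed
  show ?thesis using P[of n] unfolding A_def B_def c_def by simp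
qed

lemma rec_main:
  assumes nz: "\<forall>n. x n \<noteq> 0"
    and rec: "\<forall>n. x (n + 4) * x n = x (n + 3) * x (n + 1) + \<beta> * x (n + 2)"
  shows "(\<forall>n. x (n + 9) - (J1 \<beta> (init4 x) + 1) * (x (n + 6) - x (n + 3)) - x n = 0)
        \<and> (J1 \<beta> (init4 x) \<noteq> 0 \<longrightarrow> J1 \<beta> (init4 x) \<noteq> 2 \<longrightarrow>
            (\<forall>n. \<forall>j<3.
               x (3 * n + j) =
                 (2 * x j - 2 * x (j + 3) / J1 \<beta> (init4 x)
                   - 2 * \<beta> * Cj \<beta> j (init4 x) * (J1 \<beta> (init4 x) - 1)
                       / (J1 \<beta> (init4 x) * (J1 \<beta> (init4 x) - 2)))
                   * chebT n (J1 \<beta> (init4 x) / 2)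
                 + (- x j + (2 * x (j + 3) + \<beta> * Cj \<beta> j (init4 x)) / J1 \<beta> (init4 x))
                   * chebU n (J1 \<beta> (init4 x) / 2)
                 + \<beta> * Cj \<beta> j (init4 x) / (J1 \<beta> (init4 x) - 2)))"
proof -
  let ?S = "Sq x"
  have dom: "?S n \<in> dom4" for n using Sq_dom[OF nz] .
  have step: "?S (Suc n) = phi \<beta> (?S n)" for n using Sq_step[OF nz rec] .
  have rot: "C0 \<beta> (?S (Suc n)) = C1 \<beta> (?S n)" "C1 \<beta> (?S (Suc n)) = C2 \<beta> (?S n)"
    "C2 \<beta> (?S (Suc n)) = C0 \<beta> (?S n)" for n
    using rotC[of "?S n" \<beta>] dom[of n] dom[of "Suc n"] step[of n] by auto
  have Jinv: "J1 \<beta> (?S n) = J1 \<beta> (init4 x)" for n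
  proof (induction n)
    case 0 then show ?case by (simp add: Sq0)
  next
    case (Suc n) then show ?case
      using conserved[of "?S n" \<beta>] dom[of n] dom[of "Suc n"] step[of n] by auto
  qed
  have per: "C0 \<beta> (?S (n + 3)) = C0 \<beta> (?S n)" for n
  proof -
    have "C0 \<beta> (?S (Suc (Suc (Suc n)))) = C0 \<beta> (?S n)"
      using rot(1)[of "Suc (Suc n)"] rot(2)[of "Suc n"] rot(3)[of n] by simp
    then show ?thesis by (simp add: numeral_3_eq_3)
  qed
  define J where "J = J1 \<beta> (init4 x)"
  have key: "x (n + 6) - J * x (n + 3) + x n = - \<beta> * C0 \<beta> (?S n)" for n
  proof -
    have nzs: "x n \<noteq> 0" "x (n+1) \<noteq> 0" "x (n+2) \<noteq> 0" "x (n+3) \<noteq> 0" using nz by auto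
    have r1: "x (n+4) * x n = x (n+3) * x (n+1) + \<beta> * x (n+2)" using rec by simp
    have r2: "x (n+5) * x (n+1) = x (n+4) * x (n+2) + \<beta> * x (n+3)"
      using rec[rule_format, of "n+1"] by (simp add: eval_nat_numeral)
    have r3: "x (n+6) * x (n+2) = x (n+5) * x (n+3) + \<beta> * x (n+4)"
      using rec[rule_format, of "n+2"] by (simp add: eval_nat_numeral)
    have "x (n + 6) - J1 \<beta> (?S n) * x (n + 3) + x n = - \<beta> * C0 \<beta> (?S n)"
      unfolding J1_def C0_def C1_def C2_def Sq_comp
      by (rule key_generic[OF nzs r1 r2 r3])
    then show ?thesis unfolding J_def Jinv .
  qed
  have part1: "\<forall>n. x (n + 9) - (J1 \<beta> (init4 x) + 1) * (x (n + 6) - x (n + 3)) - x n = 0"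
  proof
    fix n
    have k1: "x (n + 9) - J * x (n + 6) + x (n + 3) = - \<beta> * C0 \<beta> (?S (n + 3))"
      using key[of "n+3"] by (simp add: add.assoc)
    have "x (n + 9) - (J + 1) * (x (n + 6) - x (n + 3)) - x n
        = (x (n + 9) - J * x (n + 6) + x (n + 3)) - (x (n + 6) - J * x (n + 3) + x n)"
      by (simp add: algebra_simps)
    also have "\<dots> = 0" unfolding k1 key per by simp
    finally show "x (n + 9) - (J1 \<beta> (init4 x) + 1) * (x (n + 6) - x (n + 3)) - x n = 0"
      unfolding J_def .
  qed
  have Cjv: "Cj \<beta> j (init4 x) = C0 \<beta> (?S j)" if "j < 3" for j
  proof -
    have "j = 0 \<or> j = 1 \<or> j = 2" using that by auto
    then show ?thesis
    proof (elim disjE)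
      assume "j = 0" then show ?thesis by (simp add: Cj_def Sq0)
    next
      assume "j = 1" then show ?thesis using rot(1)[of 0] by (simp add: Cj_def Sq0)
    next
      assume "j = 2"
      have "C0 \<beta> (?S 2) = C2 \<beta> (?S 0)" using rot(1)[of 1] rot(2)[of 0] by (simp add: numeral_2_eq_2)
      then show ?thesis using \<open>j = 2\<close> by (simp add: Cj_def Sq0)
    qed
  qed
  have perm: "C0 \<beta> (?S (3 * m + j)) = C0 \<beta> (?S j)" for m j
  proof (induction m)
    case 0 then show ?case by simp
  next
    case (Suc m)
    have e: "3 * Suc m + j = (3 * m + j) + 3" by simp
    show ?case unfolding e per[of "3 * m + j"] by (rule Suc.IH)
  qed
  have part2: "J \<noteq> 0 \<longrightarrow> J \<noteq> 2 \<longrightarrow> (\<forall>n. \<forall>j<3.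
               x (3 * n + j) =
                 (2 * x j - 2 * x (j + 3) / J - 2 * \<beta> * Cj \<beta> j (init4 x) * (J - 1) / (J * (J - 2)))
                   * chebT n (J / 2)
                 + (- x j + (2 * x (j + 3) + \<beta> * Cj \<beta> j (init4 x)) / J) * chebU n (J / 2)
                 + \<beta> * Cj \<beta> j (init4 x) / (J - 2))"
  proof (intro impI allI)
    fix n j :: nat
    assume J0: "J \<noteq> 0" and J2: "J \<noteq> 2" and j3: "j < 3"
      define y where "y = (\<lambda>m. x (3 * m + j))"
      have ry: "y (Suc (Suc m)) = J * y (Suc m) - y m - \<beta> * Cj \<beta> j (init4 x)" for m
      proof -
        have e1: "3 * Suc (Suc m) + j = (3 * m + j) + 6" by simp
        have e2: "3 * Suc m + j = (3 * m + j) + 3" by simp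
        have k: "x ((3 * m + j) + 6) - J * x ((3 * m + j) + 3) + x (3 * m + j) = - \<beta> * C0 \<beta> (?S j)"
          using key[of "3 * m + j"] unfolding perm .
        show ?thesis unfolding y_def e1 e2 Cjv[OF j3]
          using k by (simp add: algebra_simps)
      qed
      have y0: "y 0 = x j" and y1: "y 1 = x (j + 3)" by (simp_all add: y_def add.commute)
      show "x (3 * n + j) = (2 * x j - 2 * x (j + 3) / J - 2 * \<beta> * Cj \<beta> j (init4 x) * (J - 1) / (J * (J - 2)))
                   * chebT n (J / 2)
                 + (- x j + (2 * x (j + 3) + \<beta> * Cj \<beta> j (init4 x)) / J) * chebU n (J / 2)
                 + \<beta> * Cj \<beta> j (init4 x) / (J - 2)"
        using cheb_sol[of J y \<beta> "Cj \<beta> j (init4 x)" n, OF J0 J2 ry] unfolding y0 y1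
        by (simp add: y_def)
  qed
  show ?thesis using part1 part2 unfolding J_def by blast
qed


theorem theorem3p6:
  fixes \<beta> :: complex
  shows
    \<comment> \<open>J1, J2, J3 are conserved quantities of phi\<close>
    "(\<forall>x\<in>dom4. phi \<beta> x \<in> dom4 \<longrightarrow>
        J1 \<beta> (phi \<beta> x) = J1 \<beta> x \<and> J2 \<beta> (phi \<beta> x) = J2 \<beta> x \<and> J3 \<beta> (phi \<beta> x) = J3 \<beta> x)
   \<and> \<comment> \<open>they are functionally independent\<close>
     (\<exists>x\<in>dom4. \<forall>a b c :: complex.
        a *s grad (J1 \<beta>) x + b *s grad (J2 \<beta>) x + c *s grad (J3 \<beta>) x = 0
          \<longrightarrow> a = 0 \<and> b = 0 \<and> c = 0)
   \<and> \<comment> \<open>Poisson commutation\<close>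
     (\<forall>x\<in>dom4. pbracket (J1 \<beta>) (J2 \<beta>) x = 0 \<and> pbracket (J1 \<beta>) (J3 \<beta>) x = 0)
   \<and> \<comment> \<open>linear recurrence and explicit solution along orbits\<close>
     (\<forall>x :: nat \<Rightarrow> complex.
        (\<forall>n. x n \<noteq> 0) \<longrightarrow>
        (\<forall>n. x (n + 4) * x n = x (n + 3) * x (n + 1) + \<beta> * x (n + 2)) \<longrightarrow>
        (\<forall>n. x (n + 9) - (J1 \<beta> (init4 x) + 1) * (x (n + 6) - x (n + 3)) - x n = 0)
        \<and> (J1 \<beta> (init4 x) \<noteq> 0 \<longrightarrow> J1 \<beta> (init4 x) \<noteq> 2 \<longrightarrow>
            (\<forall>n. \<forall>j<3.
               x (3 * n + j) =
                 (2 * x j - 2 * x (j + 3) / J1 \<beta> (init4 x)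
                   - 2 * \<beta> * Cj \<beta> j (init4 x) * (J1 \<beta> (init4 x) - 1)
                       / (J1 \<beta> (init4 x) * (J1 \<beta> (init4 x) - 2)))
                   * chebT n (J1 \<beta> (init4 x) / 2)
                 + (- x j + (2 * x (j + 3) + \<beta> * Cj \<beta> j (init4 x)) / J1 \<beta> (init4 x))
                   * chebU n (J1 \<beta> (init4 x) / 2)
                 + \<beta> * Cj \<beta> j (init4 x) / (J1 \<beta> (init4 x) - 2))))"
proof (intro conjI)
  show "\<forall>x\<in>dom4. phi \<beta> x \<in> dom4 \<longrightarrow>
        J1 \<beta> (phi \<beta> x) = J1 \<beta> x \<and> J2 \<beta> (phi \<beta> x) = J2 \<beta> x \<and> J3 \<beta> (phi \<beta> x) = J3 \<beta> x"
    using conserved by blast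
next
  show "\<exists>x\<in>dom4. \<forall>a b c :: complex.
        a *s grad (J1 \<beta>) x + b *s grad (J2 \<beta>) x + c *s grad (J3 \<beta>) x = 0
          \<longrightarrow> a = 0 \<and> b = 0 \<and> c = 0"
    by (rule indep)
next
  show "\<forall>x\<in>dom4. pbracket (J1 \<beta>) (J2 \<beta>) x = 0 \<and> pbracket (J1 \<beta>) (J3 \<beta>) x = 0"
    using bracket_J by blast
qed (use rec_main in blast)


end
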